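(* Let $f(x,\theta)$ be a model, differentiable in its parameters $\theta\in\mathbb{R}^d$, and let $\mathcal{L}(\hat y, y)$ be a loss function. Let $\boldsymbol{\theta^{(t-1)}} = [\theta^L,\theta^U]\subseteq\mathbb{R}^d$ be an interval parameter domain. Let $\mathcal{B}^{(t)} = \{(\tilde x^{(i)},\tilde y^{(i)})\}_{i=1}^b$ be a nominal batch of size $b$, and let $n$ be an integer with $0\le n<b$. For each $i$, let $\delta_L^{(t,i)},\delta_U^{(t,i)}\in\mathbb{R}^d$ satisfy, element-wise, $$\delta_L^{(t,i)}\le \nabla_\theta\mathcal{L}\big(f(\tilde x^{(i)},\theta'),\tilde y^{(i)}\big)\le \delta_U^{(t,i)}\quad\text{for all }\theta'\in\boldsymbol{\theta^{(t-1)}}.$$ Then for every $\theta^{(t-1)}\in\boldsymbol{\theta^{(t-1)}}$ and every perturbed batch $\tilde{\mathcal{B}}^{(t)}$ obtained from $\mathcal{B}^{(t)}$ by removing up to $n$ data points, the descent direction $$\Delta\theta^{(t)} = \frac{1}{|\tilde{\mathcal{B}}^{(t)}|}\sum_{(\tilde x^{(i)},\tilde y^{(i)})\in\tilde{\mathcal{B}}^{(t)}}\nabla_\theta\mathcal{L}\big(f(\tilde x^{(i)},\theta^{(t-1)}),\tilde y^{(i)}\big)$$ satisfies, element-wise, $\Delta\theta_L^{(t)}\le\Delta\theta^{(t)}\le\Delta\theta_U^{(t)}$, where $$\Delta\theta_L^{(t)} = \frac{1}{b-n}\,\operatorname{SEMin}_{b-n}\{\delta_L^{(t,i)}\}_{i=1}^b,\qquad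 \Delta\theta_U^{(t)} = \frac{1}{b-n}\,\operatorname{SEMax}_{b-n}\{\delta_U^{(t,i)}\}_{i=1}^b.$$
   Context: An interval domain $[\theta^L,\theta^U]\subseteq\mathbb{R}^d$ is the set of $\theta$ with $\theta^L_j\le\theta_j\le\theta^U_j$ for all $j$. For a collection of vectors $\{v^{(i)}\}_{i=1}^b\subseteq\mathbb{R}^d$ and an integer $a\le b$, $\operatorname{SEMax}_a\{v^{(i)}\}$ is the vector whose $j$-th entry is the sum of the $a$ largest values among $v^{(1)}_j,\dots,v^{(b)}_j$, and $\operatorname{SEMin}_a\{v^{(i)}\}$ is the vector whose $j$-th entry is the sum of the $a$ smallest values among $v^{(1)}_j,\dots,v^{(b)}_j$ (computed independently at each index $j$). *)

theory Defs
  imports "HOL-Analysis.Analysis"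
begin

definition interval_dom :: "real^'d \<Rightarrow> real^'d \<Rightarrow> (real^'d) set" where
  "interval_dom thL thU = {th. \<forall>j. thL $ j \<le> th $ j \<and> th $ j \<le> thU $ j}"

text \<open>SEMin_a / SEMax_a of the collection v 0, ..., v (b-1) (indices shifted to 0..b-1):
  at each coordinate j, the sum of the a smallest / a largest values among v i $ j.\<close>
definition SEMin :: "nat \<Rightarrow> nat \<Rightarrow> (nat \<Rightarrow> real^'d) \<Rightarrow> real^'d" where
  "SEMin a b v = (\<chi> j. sum_list (take a (sort (map (\<lambda>i. v i $ j) [0..<b]))))"

definition SEMax :: "nat \<Rightarrow> nat \<Rightarrow> (nat \<Rightarrow> real^'d) \<Rightarrow> real^'d" where
  "SEMax a b v = (\<chi> j. sum_list (take a (rev (sort (map (\<lambda>i. v i $ j) [0..<b])))))"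

end

theory Submission
  imports Defs
begin

lemma fr: fixes m k s G :: real assumes "0 < m" "0 < k" "k * s \<le> m * G" shows "s / m \<le> G / k"
proof -
  have "s / m = (k * s) / (m * k)" using assms by simp
  also have "\<dots> \<le> (m * G) / (m * k)" using assms by (intro divide_right_mono) auto
  also have "\<dots> = G / k" using assms by simp
  finally show ?thesis .
qed

lemma sum_list_minus_const: "sum_list (map (\<lambda>y. t - y) zs) = real (length zs) * t - sum_list (zs::real list)"
  by (induction zs) (auto simp: algebra_simps)

lemma sum_list_plus_const: "sum_list (map (\<lambda>y. y - t) zs) = sum_list (zs::real list) - real (length zs) * t"
  by (induction zs) (auto simp: algebra_simps)

lemma sum_list_le_const: "(\<forall>y\<in>set zs. y \<le> t) \<Longrightarrow> sum_list zs \<le> real (length zs) * (t::real)"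
  by (induction zs) (auto simp: algebra_simps)

lemma sum_list_mset_eq:
  fixes h :: "'a \<Rightarrow> 'b::comm_monoid_add"
  assumes "mset ys = mset xs"
  shows "sum_list (map h ys) = sum_list (map h xs)"
proof -
  have "sum_list (map h ys) = sum_mset (mset (map h ys))" by (rule sum_mset_sum_list[symmetric])
  also have "mset (map h ys) = image_mset h (mset ys)" by (rule mset_map)
  also have "\<dots> = image_mset h (mset xs)" using assms by simp
  also have "\<dots> = mset (map h xs)" by (rule mset_map[symmetric])
  also have "sum_mset \<dots> = sum_list (map h xs)" by (rule sum_mset_sum_list)
  finally show ?thesis .
qed

lemma split_min:
  fixes xs ys :: "real list"
  assumes "mset ys = mset xs" "m \<le> length ys"
    "\<forall>y\<in>set (take m ys). y \<le> t" "\<forall>y\<in>set (drop m ys). t \<le> y"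
  shows "sum_list (take m ys) = real m * t - sum_list (map (\<lambda>y. max 0 (t - y)) xs)"
proof -
  let ?h = "\<lambda>y. max 0 (t - y)"
  have "sum_list (map ?h xs) = sum_list (map ?h ys)" by (rule sum_list_mset_eq[OF assms(1), symmetric])
  also have "\<dots> = sum_list (map ?h (take m ys)) + sum_list (map ?h (drop m ys))"
    by (simp flip: sum_list_append map_append)
  also have "map ?h (take m ys) = map (\<lambda>y. t - y) (take m ys)" using assms(3) by auto
  also have "map ?h (drop m ys) = map (\<lambda>y. 0) (drop m ys)" using assms(4) by auto
  finally show ?thesis using assms(2) by (simp add: sum_list_minus_const)
qed

lemma split_max:
  fixes xs ys :: "real list"
  assumes "mset ys = mset xs" "m \<le> length ys"
    "\<forall>y\<in>set (take m ys). t \<le> y" "\<forall>y\<in>set (drop m ys). y \<le> t"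
  shows "sum_list (take m ys) = real m * t + sum_list (map (\<lambda>y. max 0 (y - t)) xs)"
proof -
  let ?h = "\<lambda>y. max 0 (y - t)"
  have "sum_list (map ?h xs) = sum_list (map ?h ys)" by (rule sum_list_mset_eq[OF assms(1), symmetric])
  also have "\<dots> = sum_list (map ?h (take m ys)) + sum_list (map ?h (drop m ys))"
    by (simp flip: sum_list_append map_append)
  also have "map ?h (take m ys) = map (\<lambda>y. y - t) (take m ys)" using assms(3) by auto
  also have "map ?h (drop m ys) = map (\<lambda>y. 0) (drop m ys)" using assms(4) by auto
  finally show ?thesis using assms(2) by (simp add: sum_list_plus_const)
qed

lemma sum_map_upt: "sum_list (map h (map a [0..<b])) = (\<Sum>i<b. h (a i))"
  by (simp add: sum_list_sum_nth lessThan_atLeast0)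

lemma core_min:
  fixes a g :: "nat \<Rightarrow> real"
  assumes S: "S \<subseteq> {..<b}" and m1: "1 \<le> m" and mk: "m \<le> card S"
    and ag: "\<forall>i\<in>S. a i \<le> g i"
  shows "sum_list (take m (sort (map a [0..<b]))) / m \<le> (\<Sum>i\<in>S. g i) / card S"
proof -
  define ys where "ys = sort (map a [0..<b])"
  define t where "t = ys ! (m - 1)"
  define h where "h = (\<lambda>y. max 0 (t - y))"
  define s where "s = sum_list (take m ys)"
  define k where "k = card S"
  have fin: "finite S" using S finite_subset by blast
  have kb: "k \<le> b" unfolding k_def using card_mono[OF finite_lessThan S] by simp
  have len: "length ys = b" by (simp add: ys_def)
  have sorted: "sorted ys" by (simp add: ys_def)
  have lm: "m \<le> length ys" using mk kb len k_def by simp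
  have tk: "\<forall>y\<in>set (take m ys). y \<le> t"
  proof
    fix y assume "y \<in> set (take m ys)"
    then obtain i where i: "i < length (take m ys)" "y = take m ys ! i" by (auto simp: in_set_conv_nth)
    have "i \<le> m - 1" "m - 1 < length ys" using i lm m1 by auto
    then have "ys ! i \<le> ys ! (m - 1)" by (rule sorted_nth_mono[OF sorted])
    moreover have "y = ys ! i" using i by simp
    ultimately show "y \<le> t" unfolding t_def by simp
  qed
  have td: "\<forall>y\<in>set (drop m ys). t \<le> y"
  proof
    fix y assume "y \<in> set (drop m ys)"
    then obtain i where i: "i < length (drop m ys)" "y = drop m ys ! i" by (auto simp: in_set_conv_nth)
    have "m - 1 \<le> m + i" "m + i < length ys" using i lm m1 by auto
    then have "ys ! (m - 1) \<le> ys ! (m + i)" by (rule sorted_nth_mono[OF sorted])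
    moreover have "y = ys ! (m + i)" using i lm by simp
    ultimately show "t \<le> y" unfolding t_def by simp
  qed
  have ms: "mset ys = mset (map a [0..<b])" by (simp add: ys_def)
  have "sum_list (take m ys) = real m * t - sum_list (map h (map a [0..<b]))"
    unfolding h_def by (rule split_min[OF ms lm tk td])
  then have E1: "s = real m * t - (\<Sum>i<b. h (a i))"
    unfolding s_def sum_map_upt .
  have E2: "s \<le> real m * t"
  proof -
    have "s \<le> real (length (take m ys)) * t" unfolding s_def
      using tk sum_list_le_const by blast
    then show ?thesis using mk kb len k_def by simp
  qed
  have hnn: "\<And>y. 0 \<le> h y" unfolding h_def by simp
  have c1: "(\<Sum>i\<in>S. t - h (a i)) \<le> (\<Sum>i\<in>S. g i)"
  proof (rule sum_mono)
    fix i assume "i \<in> S"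
    then have "a i \<le> g i" using ag by blast
    moreover have "t - h (a i) \<le> a i" unfolding h_def by (simp add: max_def)
    ultimately show "t - h (a i) \<le> g i" by linarith
  qed
  have c2: "(\<Sum>i\<in>S. t - h (a i)) = real k * t - (\<Sum>i\<in>S. h (a i))"
    by (simp add: sum_subtractf k_def)
  have c3: "(\<Sum>i\<in>S. h (a i)) \<le> (\<Sum>i<b. h (a i))"
    using S hnn by (intro sum_mono2) auto
  have E3: "(\<Sum>i\<in>S. g i) \<ge> real k * t - (\<Sum>i<b. h (a i))" using c1 c2 c3 by linarith
  have mk': "real m \<le> real k" using mk k_def by simp
  define H where "H = (\<Sum>i<b. h (a i))"
  define G where "G = (\<Sum>i\<in>S. g i)"
  have E3': "real k * t - H \<le> G" using E3 unfolding H_def G_def .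
  have E1': "H = real m * t - s" using E1 unfolding H_def by linarith
  have p: "0 \<le> (real k - real m) * (real m * t - s)" using mk' E2 by (intro mult_nonneg_nonneg) auto
  have "real m * (real k * t - H) \<le> real m * G" using E3' by (rule mult_left_mono) simp
  moreover have "real m * (real k * t - H) = (real k - real m) * (real m * t - s) + real k * s"
    unfolding E1' by (simp add: algebra_simps)
  ultimately have key: "real k * s \<le> real m * G" using p by linarith
  have pos: "0 < real m" "0 < real k" using m1 mk' by auto
  have fin: "s / real m \<le> G / real k" by (rule fr[OF pos key])
  show ?thesis using fin by (simp only: s_def ys_def G_def k_def)
qed


lemma rev_sorted_nth:
  fixes zs :: "real list"
  assumes "sorted zs" "i \<le> j" "j < length zs"
  shows "rev zs ! j \<le> rev zs ! i"
proof -
  have "zs ! (length zs - Suc j) \<le> zs ! (length zs - Suc i)"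
    using assms by (intro sorted_nth_mono) auto
  then show ?thesis using assms by (simp add: rev_nth)
qed

lemma core_max:
  fixes a g :: "nat \<Rightarrow> real"
  assumes S: "S \<subseteq> {..<b}" and m1: "1 \<le> m" and mk: "m \<le> card S"
    and ag: "\<forall>i\<in>S. g i \<le> a i"
  shows "(\<Sum>i\<in>S. g i) / card S \<le> sum_list (take m (rev (sort (map a [0..<b])))) / m"
proof -
  define zs where "zs = sort (map a [0..<b])"
  define ys where "ys = rev zs"
  define t where "t = ys ! (m - 1)"
  define h where "h = (\<lambda>y. max 0 (y - t))"
  define s where "s = sum_list (take m ys)"
  define k where "k = card S"
  have fin: "finite S" using S finite_subset by blast
  have kb: "k \<le> b" unfolding k_def using card_mono[OF finite_lessThan S] by simp
  have len: "length zs = b" by (simp add: zs_def)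
  have sorted: "sorted zs" by (simp add: zs_def)
  have tk: "\<forall>y\<in>set (take m ys). t \<le> y"
  proof
    fix y assume "y \<in> set (take m ys)"
    then obtain i where i: "i < length (take m ys)" "y = take m ys ! i" by (auto simp: in_set_conv_nth)
    have lm: "m \<le> length zs" using mk kb len k_def by simp
    have "i \<le> m - 1" "m - 1 < length zs" using i lm m1 by auto
    then have "rev zs ! (m - 1) \<le> rev zs ! i" by (rule rev_sorted_nth[OF sorted])
    moreover have "y = ys ! i" using i by simp
    ultimately show "t \<le> y" unfolding t_def ys_def by simp
  qed
  have td: "\<forall>y\<in>set (drop m ys). y \<le> t"
  proof
    fix y assume "y \<in> set (drop m ys)"
    then obtain i where i: "i < length (drop m ys)" "y = drop m ys ! i" by (auto simp: in_set_conv_nth)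
    have lm: "m \<le> length zs" using mk kb len k_def by simp
    have "m - 1 \<le> m + i" "m + i < length zs" using i lm m1 by (auto simp: ys_def)
    then have "rev zs ! (m + i) \<le> rev zs ! (m - 1)" by (rule rev_sorted_nth[OF sorted])
    moreover have "y = ys ! (m + i)" using i lm by (simp add: ys_def)
    ultimately show "y \<le> t" unfolding t_def ys_def by simp
  qed
  have ms: "mset ys = mset (map a [0..<b])" by (simp add: ys_def zs_def)
  have lm: "m \<le> length ys" using mk kb len k_def by (simp add: ys_def)
  have "sum_list (take m ys) = real m * t + sum_list (map h (map a [0..<b]))"
    unfolding h_def by (rule split_max[OF ms lm tk td])
  then have E1: "s = real m * t + (\<Sum>i<b. h (a i))"
    unfolding s_def sum_map_upt .
  have hnn: "\<And>y. 0 \<le> h y" unfolding h_def by simp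
  have "0 \<le> (\<Sum>i<b. h (a i))" using hnn by (simp add: sum_nonneg)
  then have E2: "real m * t \<le> s" using E1 by linarith
  have c0: "g i \<le> t + h (a i)" if "i \<in> S" for i
  proof -
    have "a i \<le> t + h (a i)" unfolding h_def by (simp add: max_def)
    then show ?thesis using ag that by fastforce
  qed
  have c1: "(\<Sum>i\<in>S. g i) \<le> (\<Sum>i\<in>S. t + h (a i))"
    using c0 by (rule sum_mono)
  have c2: "(\<Sum>i\<in>S. t + h (a i)) = real k * t + (\<Sum>i\<in>S. h (a i))"
    by (simp add: sum.distrib k_def)
  have c3: "(\<Sum>i\<in>S. h (a i)) \<le> (\<Sum>i<b. h (a i))"
    using S hnn by (intro sum_mono2) auto
  have mk': "real m \<le> real k" using mk k_def by simp
  define H where "H = (\<Sum>i<b. h (a i))"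
  define G where "G = (\<Sum>i\<in>S. g i)"
  have E3': "G \<le> real k * t + H" using c1 c2 c3 unfolding H_def G_def by linarith
  have E1': "H = s - real m * t" using E1 unfolding H_def by linarith
  have p: "0 \<le> (real k - real m) * (s - real m * t)" using mk' E2 by (intro mult_nonneg_nonneg) auto
  have "real m * G \<le> real m * (real k * t + H)" using E3' by (rule mult_left_mono) simp
  moreover have "real m * (real k * t + H) = real k * s - (real k - real m) * (s - real m * t)"
    unfolding E1' by (simp add: algebra_simps)
  ultimately have key: "real m * G \<le> real k * s" using p by linarith
  have pos: "0 < real m" "0 < real k" using m1 mk' by auto
  have fin: "G / real k \<le> s / real m" by (rule fr[OF pos(2,1) key])
  show ?thesis using fin by (simp only: s_def ys_def zs_def G_def k_def)
qed

theorem mainTheorem1: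
  fixes f :: "'x \<Rightarrow> real^'d \<Rightarrow> 'o::real_normed_vector"
    and L :: "'o \<Rightarrow> 'y \<Rightarrow> real"
    and grad :: "'x \<Rightarrow> 'y \<Rightarrow> real^'d \<Rightarrow> real^'d"
    and thL thU :: "real^'d"
    and xs :: "nat \<Rightarrow> 'x" and ys :: "nat \<Rightarrow> 'y"
    and b n :: nat
    and dL dU :: "nat \<Rightarrow> real^'d"
    and th :: "real^'d"
    and S :: "nat set"
  assumes f_diff: "\<And>x th'. f x differentiable (at th')"
    and grad: "\<And>i th'. i < b \<Longrightarrow> th' \<in> interval_dom thL thU \<Longrightarrow>
        ((\<lambda>t. L (f (xs i) t) (ys i)) has_derivative (\<lambda>h. grad (xs i) (ys i) th' \<bullet> h)) (at th')"
    and n_lt: "n < b"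
    and dL_bound: "\<And>i th' j. i < b \<Longrightarrow> th' \<in> interval_dom thL thU \<Longrightarrow>
        dL i $ j \<le> grad (xs i) (ys i) th' $ j"
    and dU_bound: "\<And>i th' j. i < b \<Longrightarrow> th' \<in> interval_dom thL thU \<Longrightarrow>
        grad (xs i) (ys i) th' $ j \<le> dU i $ j"
    and th_in: "th \<in> interval_dom thL thU"
    and S_sub: "S \<subseteq> {..<b}"
    and S_card: "b - n \<le> card S"
  shows "\<forall>j. (1 / real (b - n)) * SEMin (b - n) b dL $ j
              \<le> ((1 / real (card S)) *\<^sub>R (\<Sum>i\<in>S. grad (xs i) (ys i) th)) $ j
         \<and> ((1 / real (card S)) *\<^sub>R (\<Sum>i\<in>S. grad (xs i) (ys i) th)) $ j
              \<le> (1 / real (b - n)) * SEMax (b - n) b dU $ j"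
proof (intro allI conjI)
  fix j
  have m1: "1 \<le> b - n" using n_lt by simp
  have S_b: "\<And>i. i \<in> S \<Longrightarrow> i < b" using S_sub by auto
  have comp: "((1 / real (card S)) *\<^sub>R (\<Sum>i\<in>S. grad (xs i) (ys i) th)) $ j
      = (\<Sum>i\<in>S. grad (xs i) (ys i) th $ j) / real (card S)"
    by (simp add: sum_component)
  have mn: "SEMin (b - n) b dL $ j = sum_list (take (b - n) (sort (map (\<lambda>i. dL i $ j) [0..<b])))"
    by (simp add: SEMin_def)
  have mx: "SEMax (b - n) b dU $ j = sum_list (take (b - n) (rev (sort (map (\<lambda>i. dU i $ j) [0..<b]))))"
    by (simp add: SEMax_def)
  have A: "sum_list (take (b - n) (sort (map (\<lambda>i. dL i $ j) [0..<b]))) / real (b - n)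
      \<le> (\<Sum>i\<in>S. grad (xs i) (ys i) th $ j) / real (card S)"
    by (rule core_min[OF S_sub m1 S_card]) (use dL_bound[OF S_b th_in] in blast)
  have B: "(\<Sum>i\<in>S. grad (xs i) (ys i) th $ j) / real (card S)
      \<le> sum_list (take (b - n) (rev (sort (map (\<lambda>i. dU i $ j) [0..<b])))) / real (b - n)"
    by (rule core_max[OF S_sub m1 S_card]) (use dU_bound[OF S_b th_in] in blast)
  show "(1 / real (b - n)) * SEMin (b - n) b dL $ j
              \<le> ((1 / real (card S)) *\<^sub>R (\<Sum>i\<in>S. grad (xs i) (ys i) th)) $ j"
    using A unfolding comp mn by simp
  show "((1 / real (card S)) *\<^sub>R (\<Sum>i\<in>S. grad (xs i) (ys i) th)) $ j
              \<le> (1 / real (b - n)) * SEMax (b - n) b dU $ j"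
    using B unfolding comp mx by simp
qed

end
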